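(* If Algorithm 1 is run for any integer $T\ge\frac{2w^2\log(n/\epsilon)}{\epsilon^2}$ iterations, then for every $i\in[n]$, $\Pr[S_i-U_i\ge\epsilon T]\le\frac{\epsilon}{n}$.
   Context: Standing setup: $A\in\mathbb{R}^{m\times n}_{\ge 0}$ has no zero column and is normalized so that $\min_{i\in[n]}\|A_{:i}\|_\infty=1$, where $A_{:i}$ denotes the $i$-th column. $\epsilon\in(0,1/2]$. $\log$ is natural unless written $\log_2$. $\mu=\frac{\epsilon}{4\log(nm/\epsilon)}$, $p_j(x)=\exp\big(\frac{1}{\mu}((Ax)_j-1)\big)$, $f_\mu(x)=-\mathbf 1^Tx+\mu\sum_jp_j(x)$, $\nabla_i f_\mu(x)=-1+\sum_jA_{ji}p_j(x)$. Algorithm 1 with $T$ iterations: set $\alpha=\mu/20$, $w=\lceil\log_2(1/\epsilon)\rceil$, $x_0[i]=\frac{1-\epsilon/2}{n\|A_{:i}\|_\infty}$. For $k=0,\dots,T-1$: choose $t_k\in\{0,\dots,w-1\}$ uniformly at random, independently of the past; writing $g_i=\nabla_i f_\mu(x_k)$, define $\xi_k[i]=0$ if $|g_i|\le\epsilon$, $\xi_k[i]=g_i$ if $\epsilon<|g_i|\le 1$, $\xi_k[i]=1$ if $g_i>1$; $\xi^{(t)}_k[i]=\xi_k[i]$ if $\epsilon2^t<|\xi_k[i]|\le\epsilon2^{t+1}$ and $0$ otherwise; $x_{k+1}[i]=x_k[i]\exp(-\alpha\,\xi^{(t_k)}_k[i])$. Bucket indicators: for each $k,i$, let $b_k(i)\in\{0,\dots,w-1\}$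 be the unique $t$ with $\epsilon2^t<|\xi_k[i]|\le\epsilon2^{t+1}$ if $\xi_k[i]\ne0$, and $b_k(i)=0$ if $\xi_k[i]=0$; let $Z^{(i)}_k=1$ if $t_k=b_k(i)$ and $0$ otherwise. Define $S_i=w\sum_{k=0}^{T-1}Z^{(i)}_k\big(\min\{\nabla_i f_\mu(x_k),1\}+\epsilon\big)$ and $U_i=\sum_{k=0}^{T-1}\big(\min\{\nabla_i f_\mu(x_k),1\}+\epsilon\big)$. *)

theory Defs
  imports "HOL-Probability.Probability"
begin

text \<open>Matrix A is represented as A :: nat => nat => real with entry (j,i) = A j i,
  rows j < m, columns i < n. Vectors are nat => real indexed by i < n.\<close>

definition colnorm :: "(nat \<Rightarrow> nat \<Rightarrow> real) \<Rightarrow> nat \<Rightarrow> nat \<Rightarrow> real" where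
  "colnorm A m i = Max ((\<lambda>j. \<bar>A j i\<bar>) ` {..<m})"

definition mu :: "nat \<Rightarrow> nat \<Rightarrow> real \<Rightarrow> real" where
  "mu m n \<epsilon> = \<epsilon> / (4 * ln (real n * real m / \<epsilon>))"

definition pj :: "(nat \<Rightarrow> nat \<Rightarrow> real) \<Rightarrow> nat \<Rightarrow> nat \<Rightarrow> real \<Rightarrow> (nat \<Rightarrow> real) \<Rightarrow> nat \<Rightarrow> real" where
  "pj A m n \<epsilon> x j = exp ((1 / mu m n \<epsilon>) * ((\<Sum>i<n. A j i * x i) - 1))"

definition grad :: "(nat \<Rightarrow> nat \<Rightarrow> real) \<Rightarrow> nat \<Rightarrow> nat \<Rightarrow> real \<Rightarrow> (nat \<Rightarrow> real) \<Rightarrow> nat \<Rightarrow> real" where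
  "grad A m n \<epsilon> x i = -1 + (\<Sum>j<m. A j i * pj A m n \<epsilon> x j)"

definition xi :: "real \<Rightarrow> real \<Rightarrow> real" where
  "xi \<epsilon> g = (if \<bar>g\<bar> \<le> \<epsilon> then 0 else if g > 1 then 1 else g)"

definition xit :: "real \<Rightarrow> nat \<Rightarrow> real \<Rightarrow> real" where
  "xit \<epsilon> t v = (if \<epsilon> * 2 ^ t < \<bar>v\<bar> \<and> \<bar>v\<bar> \<le> \<epsilon> * 2 ^ (t + 1) then v else 0)"

definition wpar :: "real \<Rightarrow> nat" where
  "wpar \<epsilon> = nat \<lceil>log 2 (1 / \<epsilon>)\<rceil>"

definition alpha :: "nat \<Rightarrow> nat \<Rightarrow> real \<Rightarrow> real" where
  "alpha m n \<epsilon> = mu m n \<epsilon> / 20"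

definition x0 :: "(nat \<Rightarrow> nat \<Rightarrow> real) \<Rightarrow> nat \<Rightarrow> nat \<Rightarrow> real \<Rightarrow> nat \<Rightarrow> real" where
  "x0 A m n \<epsilon> i = (1 - \<epsilon> / 2) / (real n * colnorm A m i)"

text \<open>Iterates x_k of Algorithm 1, given the sequence of random choices ts (ts k = t_k).\<close>
fun iter :: "(nat \<Rightarrow> nat \<Rightarrow> real) \<Rightarrow> nat \<Rightarrow> nat \<Rightarrow> real \<Rightarrow> (nat \<Rightarrow> nat) \<Rightarrow> nat \<Rightarrow> nat \<Rightarrow> real" where
  "iter A m n \<epsilon> ts 0 = x0 A m n \<epsilon>"
| "iter A m n \<epsilon> ts (Suc k) = (\<lambda>i. iter A m n \<epsilon> ts k i *
      exp (- alpha m n \<epsilon> * xit \<epsilon> (ts k) (xi \<epsilon> (grad A m n \<epsilon> (iter A m n \<epsilon> ts k) i))))"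

definition bucket :: "real \<Rightarrow> real \<Rightarrow> nat" where
  "bucket \<epsilon> v = (if v = 0 then 0 else
     (THE t. t < wpar \<epsilon> \<and> \<epsilon> * 2 ^ t < \<bar>v\<bar> \<and> \<bar>v\<bar> \<le> \<epsilon> * 2 ^ (t + 1)))"

definition Zind :: "(nat \<Rightarrow> nat \<Rightarrow> real) \<Rightarrow> nat \<Rightarrow> nat \<Rightarrow> real \<Rightarrow> (nat \<Rightarrow> nat) \<Rightarrow> nat \<Rightarrow> nat \<Rightarrow> real" where
  "Zind A m n \<epsilon> ts i k =
     (if ts k = bucket \<epsilon> (xi \<epsilon> (grad A m n \<epsilon> (iter A m n \<epsilon> ts k) i)) then 1 else 0)"

definition Ssum :: "(nat \<Rightarrow> nat \<Rightarrow> real) \<Rightarrow> nat \<Rightarrow> nat \<Rightarrow> real \<Rightarrow> nat \<Rightarrow> (nat \<Rightarrow> nat) \<Rightarrow> nat \<Rightarrow> real" where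
  "Ssum A m n \<epsilon> T ts i = real (wpar \<epsilon>) * (\<Sum>k<T. Zind A m n \<epsilon> ts i k *
      (min (grad A m n \<epsilon> (iter A m n \<epsilon> ts k) i) 1 + \<epsilon>))"

definition Usum :: "(nat \<Rightarrow> nat \<Rightarrow> real) \<Rightarrow> nat \<Rightarrow> nat \<Rightarrow> real \<Rightarrow> nat \<Rightarrow> (nat \<Rightarrow> nat) \<Rightarrow> nat \<Rightarrow> real" where
  "Usum A m n \<epsilon> T ts i = (\<Sum>k<T. min (grad A m n \<epsilon> (iter A m n \<epsilon> ts k) i) 1 + \<epsilon>)"

definition tdist :: "real \<Rightarrow> nat \<Rightarrow> (nat \<Rightarrow> nat) pmf" where
  "tdist \<epsilon> T = Pi_pmf {..<T} 0 (\<lambda>_. pmf_of_set {..<wpar \<epsilon>})"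

end

theory Submission
  imports Defs
begin

lemma two_point_pos:
  fixes p h :: real assumes "h \<ge> 0" "0 \<le> p" "p \<le> 1"
  shows "p*exp(h*(1-p)) + (1-p)*exp(-h*p) \<le> exp(h^2/8)"
proof -
  have 1: "-h*p + ln(1 + p*(exp h - 1)) \<le> h^2/8"
    using Hoeffdings_lemma_aux[of h p] assms by simp
  have pos: "1 + p*(exp h - 1) > 0"
    using assms by (intro add_pos_nonneg mult_nonneg_nonneg) auto
  have e1: "exp(-h*p + ln(1 + p*(exp h - 1))) \<le> exp(h^2/8)" using 1 by (simp only: exp_le_cancel_iff)
  have e2: "exp(-h*p + ln(1 + p*(exp h - 1))) = exp(-h*p) * (1 + p*(exp h - 1))"
    using pos by (subst exp_add) simp
  have e3: "exp(h*(1-p)) = exp h * exp(-h*p)"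
    by (simp add: exp_add[symmetric] algebra_simps)
  have "p*exp(h*(1-p)) + (1-p)*exp(-h*p) = exp(-h*p) * (1 + p*(exp h - 1))"
    unfolding e3 by (simp add: algebra_simps)
  then show ?thesis using e1 e2 by linarith
qed

lemma two_point:
  fixes p h :: real assumes "0 \<le> p" "p \<le> 1"
  shows "p*exp(h*(1-p)) + (1-p)*exp(-h*p) \<le> exp(h^2/8)"
proof (cases "h \<ge> 0")
  case True then show ?thesis using two_point_pos assms by blast
next
  case False
  have "(1-p)*exp((-h)*(1-(1-p))) + (1-(1-p))*exp(-(-h)*(1-p)) \<le> exp((-h)^2/8)"
    using two_point_pos[of "-h" "1-p"] False assms by simp
  then show ?thesis by (simp add: algebra_simps)
qed

lemma unif_bound:
  fixes w b :: nat and c l :: real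
  assumes "w > 0" "b < w"
  shows "(\<Sum>y<w. exp (l * ((real w * (if y = b then 1 else 0) - 1) * c))) / real w
         \<le> exp ((l*c*real w)^2/8)"
proof -
  have "(\<Sum>y<w. exp (l * ((real w * (if y = b then 1 else 0) - 1) * c)))
      = exp (l * ((real w - 1) * c)) + (\<Sum>y\<in>{..<w}-{b}. exp (l * ((real w * (if y = b then 1 else 0) - 1) * c)))"
    using assms by (subst sum.remove[of _ b]) auto
  also have "(\<Sum>y\<in>{..<w}-{b}. exp (l * ((real w * (if y = b then 1 else 0) - 1) * c)))
      = (\<Sum>y\<in>{..<w}-{b}. exp (-(l*c)))" by (intro sum.cong) auto
  also have "\<dots> = (real w - 1) * exp (-(l*c))" using assms by (simp add: of_nat_diff)
  finally have S: "(\<Sum>y<w. exp (l * ((real w * (if y = b then 1 else 0) - 1) * c)))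
     = exp (l * ((real w - 1) * c)) + (real w - 1) * exp (-(l*c))" .
  define p where "p = 1 / real w"
  define h where "h = l*c*real w"
  have p: "0 \<le> p" "p \<le> 1" using assms by (auto simp: p_def)
  have "h*(1-p) = l * ((real w - 1) * c)" "-h*p = -(l*c)"
    using assms by (auto simp: h_def p_def field_simps)
  then have "(\<Sum>y<w. exp (l * ((real w * (if y = b then 1 else 0) - 1) * c))) / real w
     = p*exp(h*(1-p)) + (1-p)*exp(-h*p)"
    unfolding S using assms by (simp add: p_def field_simps)
  also have "\<dots> \<le> exp(h^2/8)" by (rule two_point[OF p])
  finally show ?thesis by (simp add: h_def)
qed

lemma iter_local:
  "(\<And>j. j < k \<Longrightarrow> ts j = ts' j) \<Longrightarrow> iter A m n \<epsilon> ts k = iter A m n \<epsilon> ts' k"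
  by (induction k) auto

definition Xk :: "(nat \<Rightarrow> nat \<Rightarrow> real) \<Rightarrow> nat \<Rightarrow> nat \<Rightarrow> real \<Rightarrow> nat \<Rightarrow> nat \<Rightarrow> (nat \<Rightarrow> nat) \<Rightarrow> real" where
  "Xk A m n \<epsilon> i k ts = (real (wpar \<epsilon>) * Zind A m n \<epsilon> ts i k - 1) *
      (min (grad A m n \<epsilon> (iter A m n \<epsilon> ts k) i) 1 + \<epsilon>)"

lemma SU_eq: "Ssum A m n \<epsilon> T ts i - Usum A m n \<epsilon> T ts i = (\<Sum>k<T. Xk A m n \<epsilon> i k ts)"
  unfolding Ssum_def Usum_def Xk_def
  by (simp add: sum_distrib_left sum_subtractf[symmetric] algebra_simps)

lemma Xk_local: "k < T \<Longrightarrow> Xk A m n \<epsilon> i k (f(T:=y)) = Xk A m n \<epsilon> i k f"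
  unfolding Xk_def Zind_def
  using iter_local[of k "f(T:=y)" f A m n \<epsilon>] by auto

lemma F_upd: "(\<Sum>k<T. Xk A m n \<epsilon> i k (f(T:=y))) = (\<Sum>k<T. Xk A m n \<epsilon> i k f)"
  by (intro sum.cong) (auto simp: Xk_local)

lemma Xk_upd: "Xk A m n \<epsilon> i T (f(T:=y)) =
   (real (wpar \<epsilon>) * (if y = bucket \<epsilon> (xi \<epsilon> (grad A m n \<epsilon> (iter A m n \<epsilon> f T) i)) then 1 else 0) - 1) *
      (min (grad A m n \<epsilon> (iter A m n \<epsilon> f T) i) 1 + \<epsilon>)"
  unfolding Xk_def Zind_def
  using iter_local[of T "f(T:=y)" f A m n \<epsilon>] by auto

lemma mgf_bound:
  assumes wpos: "wpar \<epsilon> > 0"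
    and bk: "\<And>ts k. bucket \<epsilon> (xi \<epsilon> (grad A m n \<epsilon> (iter A m n \<epsilon> ts k) i)) < wpar \<epsilon>"
    and cb: "\<And>ts k. \<bar>min (grad A m n \<epsilon> (iter A m n \<epsilon> ts k) i) 1 + \<epsilon>\<bar> \<le> B"
  shows "(\<integral>\<^sup>+ts. ennreal (exp (l * (\<Sum>k<T. Xk A m n \<epsilon> i k ts))) \<partial>tdist \<epsilon> T)
          \<le> ennreal (exp (real T * ((l*B*real (wpar \<epsilon>))^2/8)))"
proof (induction T)
  case 0
  then show ?case by (simp add: measure_pmf.emeasure_space_1)
next
  case (Suc T)
  define w where "w = wpar \<epsilon>"
  define P where "P = (\<lambda>_::nat. pmf_of_set {..<w})"
  define Q where "Q = Pi_pmf {..<T} 0 P"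
  define K where "K = exp ((l*B*real w)^2/8)"
  have td: "tdist \<epsilon> (Suc T) = map_pmf (\<lambda>(f,y). f(T:=y)) (pair_pmf Q (P T))"
  proof -
    have "tdist \<epsilon> (Suc T) = Pi_pmf (insert T {..<T}) 0 P"
      unfolding tdist_def P_def w_def by (simp add: lessThan_Suc)
    also have "\<dots> = map_pmf (\<lambda>(y,f). f(T:=y)) (pair_pmf (P T) Q)"
      unfolding Q_def by (rule Pi_pmf_insert) auto
    also have "\<dots> = map_pmf (\<lambda>(f,y). f(T:=y)) (pair_pmf Q (P T))"
      by (subst pair_commute_pmf) (simp add: map_pmf_comp case_prod_unfold)
    finally show ?thesis .
  qed
  have inner: "(\<integral>\<^sup>+y. ennreal (exp (l * (\<Sum>k<Suc T. Xk A m n \<epsilon> i k (f(T:=y))))) \<partial>P T)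
      \<le> ennreal (exp (l * (\<Sum>k<T. Xk A m n \<epsilon> i k f))) * ennreal K" for f
  proof -
    define b where "b = bucket \<epsilon> (xi \<epsilon> (grad A m n \<epsilon> (iter A m n \<epsilon> f T) i))"
    define c where "c = min (grad A m n \<epsilon> (iter A m n \<epsilon> f T) i) 1 + \<epsilon>"
    have bw: "b < w" using bk unfolding b_def w_def .
    have I1: "(\<integral>\<^sup>+y. ennreal (exp (l * ((real w * (if y = b then 1 else 0) - 1) * c))) \<partial>P T)
       = ennreal ((\<Sum>y<w. exp (l * ((real w * (if y = b then 1 else 0) - 1) * c))) / real w)"
      unfolding P_def using wpos unfolding w_def[symmetric]
      by (subst nn_integral_pmf_of_set) (auto simp: ennreal_of_nat_eq_real_of_nat sum_nonneg divide_ennreal)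
    have I2: "ennreal ((\<Sum>y<w. exp (l * ((real w * (if y = b then 1 else 0) - 1) * c))) / real w) \<le> ennreal K"
    proof (rule ennreal_leI)
      have "(\<Sum>y<w. exp (l * ((real w * (if y = b then 1 else 0) - 1) * c))) / real w
          \<le> exp ((l*c*real w)^2/8)" using unif_bound[of w b l c] wpos bw w_def by simp
      also have "\<dots> \<le> K" unfolding K_def
      proof (subst exp_le_cancel_iff)
        have "\<bar>l*c*real w\<bar> \<le> \<bar>l*B*real w\<bar>"
          using cb[of f T] by (auto simp: abs_mult c_def intro!: mult_mono)
        then have "(l*c*real w)^2 \<le> (l*B*real w)^2" by (simp add: abs_le_square_iff)
        then show "(l*c*real w)^2/8 \<le> (l*B*real w)^2/8" by simp
      qed
      finally show "(\<Sum>y<w. exp (l * ((real w * (if y = b then 1 else 0) - 1) * c))) / real w \<le> K" .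
    qed
    have I: "(\<integral>\<^sup>+y. ennreal (exp (l * ((real w * (if y = b then 1 else 0) - 1) * c))) \<partial>P T) \<le> ennreal K"
      using I1 I2 by simp
    have "(\<integral>\<^sup>+y. ennreal (exp (l * (\<Sum>k<Suc T. Xk A m n \<epsilon> i k (f(T:=y))))) \<partial>P T)
       = (\<integral>\<^sup>+y. ennreal (exp (l * (\<Sum>k<T. Xk A m n \<epsilon> i k f))) *
            ennreal (exp (l * ((real w * (if y = b then 1 else 0) - 1) * c))) \<partial>P T)"
      by (intro nn_integral_cong)
         (simp add: F_upd Xk_upd b_def c_def w_def distrib_left exp_add ennreal_mult)
    also have "\<dots> = ennreal (exp (l * (\<Sum>k<T. Xk A m n \<epsilon> i k f))) *
            (\<integral>\<^sup>+y. ennreal (exp (l * ((real w * (if y = b then 1 else 0) - 1) * c))) \<partial>P T)"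
      by (rule nn_integral_cmult) simp
    also have "\<dots> \<le> ennreal (exp (l * (\<Sum>k<T. Xk A m n \<epsilon> i k f))) * ennreal K"
      using I by (intro mult_left_mono) auto
    finally show ?thesis .
  qed
  have "(\<integral>\<^sup>+ts. ennreal (exp (l * (\<Sum>k<Suc T. Xk A m n \<epsilon> i k ts))) \<partial>tdist \<epsilon> (Suc T))
      = (\<integral>\<^sup>+f. \<integral>\<^sup>+y. ennreal (exp (l * (\<Sum>k<Suc T. Xk A m n \<epsilon> i k (f(T:=y))))) \<partial>P T \<partial>Q)"
    unfolding td by (simp add: nn_integral_pair_pmf' case_prod_unfold)
  also have "\<dots> \<le> (\<integral>\<^sup>+f. ennreal (exp (l * (\<Sum>k<T. Xk A m n \<epsilon> i k f))) * ennreal K \<partial>Q)"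
    by (intro nn_integral_mono inner)
  also have "\<dots> = (\<integral>\<^sup>+f. ennreal (exp (l * (\<Sum>k<T. Xk A m n \<epsilon> i k f))) \<partial>Q) * ennreal K"
    by (rule nn_integral_multc) simp
  also have "\<dots> \<le> ennreal (exp (real T * ((l*B*real (wpar \<epsilon>))^2/8))) * ennreal K"
    using Suc.IH unfolding Q_def P_def w_def tdist_def by (intro mult_right_mono) auto
  also have "\<dots> = ennreal (exp (real (Suc T) * ((l*B*real (wpar \<epsilon>))^2/8)))"
    unfolding K_def w_def by (simp add: ennreal_mult[symmetric] exp_add[symmetric] algebra_simps)
  finally show ?case .
qed

lemma wpar_facts:
  assumes "0 < \<epsilon>" "\<epsilon> \<le> 1/2"
  shows "wpar \<epsilon> > 0" "\<epsilon> * 2 ^ wpar \<epsilon> \<ge> 1"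
proof -
  have "1 / \<epsilon> \<ge> 2" using assms by (simp add: field_simps)
  then have L1: "log 2 (1/\<epsilon>) \<ge> 1" using assms
    by (subst (asm) log_le_cancel_iff[of 2 2 "1/\<epsilon>", symmetric]) auto
  then show "wpar \<epsilon> > 0" unfolding wpar_def by linarith
  have "real (wpar \<epsilon>) \<ge> log 2 (1/\<epsilon>)" unfolding wpar_def using L1
    by (metis le_of_int_ceiling of_int_nonneg order_trans zero_le_one real_nat_ceiling_ge)
  then have "2 powr log 2 (1/\<epsilon>) \<le> 2 powr real (wpar \<epsilon>)" by (intro powr_mono) auto
  then have "1/\<epsilon> \<le> 2 ^ wpar \<epsilon>" using assms by (simp add: powr_realpow)
  then show "\<epsilon> * 2 ^ wpar \<epsilon> \<ge> 1" using assms by (simp add: field_simps)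
qed

lemma bucket_lt:
  assumes e: "0 < \<epsilon>" and w1: "\<epsilon> * 2 ^ wpar \<epsilon> \<ge> 1" and w0: "wpar \<epsilon> > 0"
    and g: "g \<ge> -1" and e1: "\<epsilon> < 1"
  shows "bucket \<epsilon> (xi \<epsilon> g) < wpar \<epsilon>"
proof (cases "xi \<epsilon> g = 0")
  case True then show ?thesis using w0 by (simp add: bucket_def)
next
  case False
  define v where "v = xi \<epsilon> g"
  have vb: "\<epsilon> < \<bar>v\<bar>" "\<bar>v\<bar> \<le> 1" using False g e1 unfolding v_def xi_def by (auto split: if_splits)
  define Pp where "Pp = (\<lambda>t::nat. \<bar>v\<bar> \<le> \<epsilon> * 2 ^ (t+1))"
  define t0 where "t0 = (LEAST t. Pp t)"
  have Pw: "Pp (wpar \<epsilon> - 1)" unfolding Pp_def using w0 w1 vb by simp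
  have Pt0: "Pp t0" unfolding t0_def by (rule LeastI[of Pp, OF Pw])
  have t0w: "t0 \<le> wpar \<epsilon> - 1" unfolding t0_def by (rule Least_le[of Pp, OF Pw])
  have low: "\<epsilon> * 2 ^ t0 < \<bar>v\<bar>"
  proof (cases t0)
    case 0 then show ?thesis using vb by simp
  next
    case (Suc s)
    have "\<not> Pp s" unfolding t0_def using Suc by (metis lessI not_less_Least t0_def)
    then show ?thesis using Suc unfolding Pp_def by simp
  qed
  have the: "(THE t. t < wpar \<epsilon> \<and> \<epsilon> * 2 ^ t < \<bar>v\<bar> \<and> \<bar>v\<bar> \<le> \<epsilon> * 2 ^ (t + 1)) = t0"
  proof (rule the_equality)
    show "t0 < wpar \<epsilon> \<and> \<epsilon> * 2 ^ t0 < \<bar>v\<bar> \<and> \<bar>v\<bar> \<le> \<epsilon> * 2 ^ (t0 + 1)"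
      using t0w w0 low Pt0 unfolding Pp_def by auto
  next
    fix t assume t: "t < wpar \<epsilon> \<and> \<epsilon> * 2 ^ t < \<bar>v\<bar> \<and> \<bar>v\<bar> \<le> \<epsilon> * 2 ^ (t + 1)"
    show "t = t0"
    proof (rule ccontr)
      assume "t \<noteq> t0"
      then consider "t < t0" | "t0 < t" by linarith
      then show False
      proof cases
        case 1
        then have "\<not> Pp t" unfolding t0_def by (rule not_less_Least)
        then show False using t unfolding Pp_def by simp
      next
        case 2
        then have "(2::real) ^ (t0+1) \<le> 2 ^ t" by (intro power_increasing) auto
        then have "\<epsilon> * 2 ^ (t0+1) \<le> \<epsilon> * 2 ^ t" using e by simp
        then show False using t Pt0 unfolding Pp_def by simp
      qed
    qed
  qed
  show ?thesis using False the t0w w0 unfolding bucket_def v_def[symmetric] by simp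
qed

lemma grad_ge:
  assumes nonneg: "\<And>j i. j < m \<Longrightarrow> i < n \<Longrightarrow> A j i \<ge> 0" and i: "i < n"
  shows "grad A m n \<epsilon> x i \<ge> -1"
  unfolding grad_def using nonneg i by (auto intro!: sum_nonneg simp: pj_def)

theorem lemma4p3:
  fixes A :: "nat \<Rightarrow> nat \<Rightarrow> real" and m n T i :: nat and \<epsilon> :: real
  assumes nonneg: "\<And>j i. j < m \<Longrightarrow> i < n \<Longrightarrow> A j i \<ge> 0"
    and nozero: "\<And>i. i < n \<Longrightarrow> \<exists>j<m. A j i \<noteq> 0"
    and normalized: "n > 0 \<Longrightarrow> Min ((\<lambda>i. colnorm A m i) ` {..<n}) = 1"
    and eps: "0 < \<epsilon>" "\<epsilon> \<le> 1/2"
    and T: "real T \<ge> 2 * real (wpar \<epsilon>)^2 * ln (real n / \<epsilon>) / \<epsilon>^2"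
    and i: "i < n"
  shows "measure_pmf.prob (tdist \<epsilon> T) {ts. Ssum A m n \<epsilon> T ts i - Usum A m n \<epsilon> T ts i \<ge> \<epsilon> * real T}
           \<le> \<epsilon> / real n"
proof -
  define w where "w = wpar \<epsilon>"
  define B where "B = 1 + \<epsilon>"
  define D where "D = (B * real w)^2"
  define l where "l = 4 * \<epsilon> / D"
  define F where "F = (\<lambda>ts. \<Sum>k<T. Xk A m n \<epsilon> i k ts)"
  define L where "L = ln (real n / \<epsilon>)"
  have w0: "w > 0" and w1: "\<epsilon> * 2 ^ w \<ge> 1" using wpar_facts[OF eps] by (auto simp: w_def)
  have Dpos: "D > 0" using w0 eps by (simp add: D_def B_def)
  have lpos: "l \<ge> 0" using Dpos eps by (simp add: l_def)
  have bk: "\<And>ts k. bucket \<epsilon> (xi \<epsilon> (grad A m n \<epsilon> (iter A m n \<epsilon> ts k) i)) < wpar \<epsilon>"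
    using bucket_lt[OF eps(1)] eps w0 w1 grad_ge[OF nonneg i] by (auto simp: w_def)
  have cb: "\<And>ts k. \<bar>min (grad A m n \<epsilon> (iter A m n \<epsilon> ts k) i) 1 + \<epsilon>\<bar> \<le> B"
  proof -
    fix ts k
    have "grad A m n \<epsilon> (iter A m n \<epsilon> ts k) i \<ge> -1" by (rule grad_ge[OF nonneg i])
    then show "\<bar>min (grad A m n \<epsilon> (iter A m n \<epsilon> ts k) i) 1 + \<epsilon>\<bar> \<le> B"
      using eps unfolding B_def by (auto simp: min_def)
  qed
  have mgf: "(\<integral>\<^sup>+ts. ennreal (exp (l * F ts)) \<partial>tdist \<epsilon> T)
          \<le> ennreal (exp (real T * ((l*B*real w)^2/8)))"
    unfolding F_def w_def by (rule mgf_bound) (use w0 bk cb in \<open>auto simp: w_def\<close>)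
  define E where "E = {ts. Ssum A m n \<epsilon> T ts i - Usum A m n \<epsilon> T ts i \<ge> \<epsilon> * real T}"
  have E_eq: "E = {ts. F ts \<ge> \<epsilon> * real T}" unfolding E_def F_def by (simp add: SU_eq)
  have "emeasure (tdist \<epsilon> T) E = (\<integral>\<^sup>+ts. indicator E ts \<partial>tdist \<epsilon> T)" by simp
  also have "\<dots> \<le> (\<integral>\<^sup>+ts. ennreal (exp (- (l * (\<epsilon> * real T)))) * ennreal (exp (l * F ts)) \<partial>tdist \<epsilon> T)"
  proof (intro nn_integral_mono)
    fix ts
    show "indicator E ts \<le> ennreal (exp (- (l * (\<epsilon> * real T)))) * ennreal (exp (l * F ts))"
    proof (cases "ts \<in> E")
      case True
      then have "l * (\<epsilon> * real T) \<le> l * F ts" using lpos E_eq by (auto intro: mult_left_mono)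
      then have "1 \<le> exp (- (l * (\<epsilon> * real T))) * exp (l * F ts)"
        by (simp add: exp_add[symmetric])
      then show ?thesis using True by (simp add: ennreal_mult[symmetric])
    qed simp
  qed
  also have "\<dots> = ennreal (exp (- (l * (\<epsilon> * real T)))) * (\<integral>\<^sup>+ts. ennreal (exp (l * F ts)) \<partial>tdist \<epsilon> T)"
    by (rule nn_integral_cmult) simp
  also have "\<dots> \<le> ennreal (exp (- (l * (\<epsilon> * real T)))) * ennreal (exp (real T * ((l*B*real w)^2/8)))"
    by (intro mult_left_mono mgf) simp
  also have "\<dots> = ennreal (exp (- (2 * \<epsilon>^2 * real T / D)))"
  proof -
    have "- (l * (\<epsilon> * real T)) + real T * ((l*B*real w)^2/8) = - (2 * \<epsilon>^2 * real T / D)"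
      using Dpos unfolding l_def by (simp add: D_def power2_eq_square field_simps)
    then show ?thesis by (simp add: ennreal_mult[symmetric] exp_add[symmetric])
  qed
  finally have em: "emeasure (tdist \<epsilon> T) E \<le> ennreal (exp (- (2 * \<epsilon>^2 * real T / D)))" .
  have prob: "measure_pmf.prob (tdist \<epsilon> T) E \<le> exp (- (2 * \<epsilon>^2 * real T / D))"
    using em by (simp add: measure_pmf.emeasure_eq_measure ennreal_le_iff)
  have n0: "real n \<ge> 1" using i by simp
  have L0: "L \<ge> 0" unfolding L_def using n0 eps by (simp add: field_simps)
  have "\<epsilon>^2 * real T \<ge> 2 * real w ^2 * L"
    using T eps unfolding L_def w_def by (simp add: field_simps)
  moreover have "B^2 \<le> 2^2" using eps unfolding B_def by (intro power_mono) auto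
  ultimately have "2 * \<epsilon>^2 * real T \<ge> D * L"
  proof -
    assume a1: "\<epsilon>^2 * real T \<ge> 2 * real w ^2 * L" and a2: "B^2 \<le> 2^2"
    have "B^2 * (real w^2 * L) \<le> 2^2 * (real w^2*L)" using a2 L0 by (intro mult_right_mono) auto
    moreover have "D * L = B^2 * (real w^2 * L)" by (simp add: D_def power_mult_distrib)
    moreover have "2 * (real w^2 * L) \<le> \<epsilon>^2 * real T" using a1 by (simp add: mult.assoc)
    ultimately show ?thesis by (simp only: power2_eq_square[of 2])
  qed
  then have "L \<le> 2 * \<epsilon>^2 * real T / D" using Dpos by (simp add: field_simps)
  then have "exp (- (2 * \<epsilon>^2 * real T / D)) \<le> exp (- L)" by simp
  also have "exp (- L) = \<epsilon> / real n" unfolding L_def using n0 eps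
    by (simp add: exp_minus)
  finally show ?thesis using prob unfolding E_def by simp
qed

end
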